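(* Let $L\ge1$ be an integer, let $K_1,\dots,K_L\subseteq[N]$ be pairwise disjoint, $x_0=\sum_{i=1}^L i\,\mathbb{1}_{K_i}$, $K=\bigcup_{i=1}^LK_i$, and $A\in\mathbb{R}^{m\times N}$. The following are equivalent: (i) $\ker(A)\cap N^+\cap H_{K_L,K^C}=\{0\}$; (ii) $x_0$ is the unique solution of $\min\|x\|_1$ subject to $Ax=Ax_0$ and $x\in[0,L]^N$.
   Context: $\mathbb{1}_S$ has entries $1$ on $S$, $0$ elsewhere; $K^C=[N]\setminus K$. $N^+=\{w\in\mathbb{R}^N:\sum_{i=1}^Nw_i\le0\}$, $H_{K_L,K^C}=\{w\in\mathbb{R}^N: w_i\le0\text{ for } i\in K_L,\ w_i\ge0\text{ for } i\in K^C\}$. "Unique solution" means unique minimizer. *)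

theory Defs
  imports "HOL-Analysis.Analysis"
begin

definition l1norm :: "real^'n \<Rightarrow> real" where
  "l1norm x = (\<Sum>j\<in>UNIV. \<bar>x $ j\<bar>)"

definition indic_vec :: "'n set \<Rightarrow> real^'n" where
  "indic_vec S = (\<chi> j. if j \<in> S then 1 else 0)"

definition kernel :: "real^'n^'m \<Rightarrow> (real^'n) set" where
  "kernel A = {w. A *v w = 0}"

definition Nplus :: "(real^'n) set" where
  "Nplus = {w. (\<Sum>i\<in>UNIV. w $ i) \<le> 0}"

definition Hcone :: "'n set \<Rightarrow> 'n set \<Rightarrow> (real^'n) set" where
  "Hcone KL KC = {w. (\<forall>i\<in>KL. w $ i \<le> 0) \<and> (\<forall>i\<in>KC. w $ i \<ge> 0)}"

definition unique_minimizer :: "('a \<Rightarrow> real) \<Rightarrow> 'a set \<Rightarrow> 'a \<Rightarrow> bool" where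
  "unique_minimizer f S x \<longleftrightarrow> x \<in> S \<and> (\<forall>y\<in>S. f x \<le> f y) \<and> (\<forall>y\<in>S. f y \<le> f x \<longrightarrow> y = x)"

end

theory Submission
  imports Defs
begin

lemma l1_nonneg: "(\<forall>j. 0 \<le> x $ j) \<Longrightarrow> l1norm x = (\<Sum>j\<in>UNIV. x $ j)"
  unfolding l1norm_def by (intro sum.cong) auto

theorem theorem4p2:
  fixes L :: nat and K :: "nat \<Rightarrow> 'n::finite set" and A :: "real^'n^'m"
  assumes "L \<ge> 1"
    and "\<And>i j. i \<in> {1..L} \<Longrightarrow> j \<in> {1..L} \<Longrightarrow> i \<noteq> j \<Longrightarrow> K i \<inter> K j = {}"
  defines "x0 \<equiv> (\<Sum>i=1..L. of_nat i *\<^sub>R indic_vec (K i))"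
    and "KK \<equiv> (\<Union>i\<in>{1..L}. K i)"
  shows "kernel A \<inter> Nplus \<inter> Hcone (K L) (UNIV - KK) = {0}
     \<longleftrightarrow> unique_minimizer l1norm
           {x. A *v x = A *v x0 \<and> (\<forall>j. 0 \<le> x $ j \<and> x $ j \<le> real L)} x0"
proof -
  have comp: "x0 $ j = (\<Sum>k=1..L. real k * (if j \<in> K k then 1 else 0))" for j
    unfolding x0_def indic_vec_def by simp
  have F1: "x0 $ j = real i" if "i \<in> {1..L}" "j \<in> K i" for i j
  proof -
    have "(\<Sum>k=1..L. real k * (if j \<in> K k then 1 else 0)) = (\<Sum>k=1..L. if k = i then real k else 0)"
      using assms(2) that by (intro sum.cong) auto
    also have "\<dots> = real i" using that by simp
    finally show ?thesis using comp by simp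
  qed
  have F2: "x0 $ j = 0" if "j \<notin> KK" for j
    using that unfolding comp KK_def by (intro sum.neutral) auto
  have F3: "0 \<le> x0 $ j \<and> x0 $ j \<le> real L" for j
  proof (cases "j \<in> KK")
    case True
    then obtain i where "i \<in> {1..L}" "j \<in> K i" unfolding KK_def by auto
    then show ?thesis using F1 by auto
  next
    case False then show ?thesis using F2 by auto
  qed
  define S where "S = {x. A *v x = A *v x0 \<and> (\<forall>j. 0 \<le> x $ j \<and> x $ j \<le> real L)}"
  have x0S: "x0 \<in> S" unfolding S_def using F3 by auto
  have l1S: "l1norm y = (\<Sum>j\<in>UNIV. y $ j)" if "y \<in> S" for y
    using that unfolding S_def by (intro l1_nonneg) auto
  show ?thesis unfolding S_def[symmetric]
  proof
    assume H: "kernel A \<inter> Nplus \<inter> Hcone (K L) (UNIV - KK) = {0}"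
    have U: "y = x0" if "y \<in> S" "l1norm y \<le> l1norm x0" for y
    proof -
      define w where "w = y - x0"
      have "A *v w = 0" using that(1) unfolding w_def S_def
        by (simp add: matrix_vector_mult_diff_distrib)
      moreover have "(\<Sum>i\<in>UNIV. w $ i) \<le> 0"
        using that l1S[OF that(1)] l1S[OF x0S] unfolding w_def by (simp add: sum_subtractf)
      moreover have "\<forall>i\<in>K L. w $ i \<le> 0"
      proof
        fix i assume "i \<in> K L"
        then have "x0 $ i = real L" using F1[of L i] assms(1) by auto
        then show "w $ i \<le> 0" using that(1) unfolding w_def S_def by auto
      qed
      moreover have "\<forall>i\<in>UNIV - KK. w $ i \<ge> 0"
        using F2 that(1) unfolding w_def S_def by auto
      ultimately have "w \<in> kernel A \<inter> Nplus \<inter> Hcone (K L) (UNIV - KK)"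
        unfolding kernel_def Nplus_def Hcone_def by auto
      then have "w = 0" using H by auto
      then show ?thesis unfolding w_def by simp
    qed
    show "unique_minimizer l1norm S x0"
      unfolding unique_minimizer_def
    proof (intro conjI ballI impI)
      show "x0 \<in> S" by (rule x0S)
    next
      fix y assume "y \<in> S"
      show "l1norm x0 \<le> l1norm y"
      proof (rule ccontr)
        assume nle: "\<not> l1norm x0 \<le> l1norm y"
        then have "l1norm y \<le> l1norm x0" by simp
        then have "y = x0" using U \<open>y \<in> S\<close> by auto
        then show False using nle by simp
      qed
    next
      fix y assume "y \<in> S" "l1norm y \<le> l1norm x0"
      then show "y = x0" using U by auto
    qed
  next
    assume UM: "unique_minimizer l1norm S x0"
    show "kernel A \<inter> Nplus \<inter> Hcone (K L) (UNIV - KK) = {0}"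
    proof
      show "{0} \<subseteq> kernel A \<inter> Nplus \<inter> Hcone (K L) (UNIV - KK)"
        unfolding kernel_def Nplus_def Hcone_def by auto
    next
      show "kernel A \<inter> Nplus \<inter> Hcone (K L) (UNIV - KK) \<subseteq> {0}"
      proof
        fix w assume w: "w \<in> kernel A \<inter> Nplus \<inter> Hcone (K L) (UNIV - KK)"
        have Aw: "A *v w = 0" and sw: "(\<Sum>i\<in>UNIV. w $ i) \<le> 0"
          and wL: "\<And>i. i \<in> K L \<Longrightarrow> w $ i \<le> 0" and wC: "\<And>i. i \<notin> KK \<Longrightarrow> w $ i \<ge> 0"
          using w unfolding kernel_def Nplus_def Hcone_def by auto
        define M where "M = 1 + (\<Sum>j\<in>UNIV. \<bar>w $ j\<bar>)"
        have Mpos: "M > 0" unfolding M_def by (simp add: add_pos_nonneg sum_nonneg)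
        define t where "t = 1 / M"
        have tpos: "t > 0" unfolding t_def using Mpos by simp
        have tw: "t * \<bar>w $ j\<bar> \<le> 1" for j
        proof -
          have "\<bar>w $ j\<bar> \<le> (\<Sum>j\<in>UNIV. \<bar>w $ j\<bar>)"
            by (rule member_le_sum) auto
          then have "\<bar>w $ j\<bar> \<le> M" unfolding M_def by simp
          then show ?thesis unfolding t_def using Mpos by (simp add: field_simps)
        qed
        define y where "y = x0 + t *\<^sub>R w"
        have yc: "y $ j = x0 $ j + t * w $ j" for j unfolding y_def by simp
        have Ly: "real L \<ge> 1" using assms(1) by simp
        have yS: "y \<in> S"
          unfolding S_def
        proof (intro CollectI conjI allI)
          show "A *v y = A *v x0" unfolding y_def
            by (simp add: matrix_vector_right_distrib matrix_vector_mult_scaleR Aw)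
        next
          fix j
          have twj: "- 1 \<le> t * w $ j \<and> t * w $ j \<le> 1" 
          proof -
            have "\<bar>t * w $ j\<bar> \<le> 1" using tw[of j] tpos by (simp add: abs_mult)
            then show ?thesis by (simp add: abs_le_iff)
          qed
          have "0 \<le> y $ j \<and> y $ j \<le> real L"
          proof (cases "j \<in> KK")
            case True
            then obtain i where i: "i \<in> {1..L}" "j \<in> K i" unfolding KK_def by auto
            show ?thesis
            proof (cases "i = L")
              case True
              then have "w $ j \<le> 0" using wL i by auto
              then have "t * w $ j \<le> 0" using tpos by (simp add: mult_nonneg_nonpos)
              then show ?thesis using F1[OF i] True twj Ly yc[of j] by auto
            next
              case False
              then have "real i + 1 \<le> real L" "1 \<le> real i" using i by auto
              then show ?thesis using F1[OF i] twj yc[of j] by auto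
            qed
          next
            case False
            then have "w $ j \<ge> 0" using wC by auto
            then have "t * w $ j \<ge> 0" using tpos by simp
            then show ?thesis using F2[OF False] twj Ly yc[of j] by auto
          qed
          then show "0 \<le> y $ j" "y $ j \<le> real L" by auto
        qed
        have "l1norm y = (\<Sum>j\<in>UNIV. x0 $ j) + t * (\<Sum>j\<in>UNIV. w $ j)"
          using l1S[OF yS] by (simp add: yc sum.distrib sum_distrib_left)
        also have "\<dots> \<le> (\<Sum>j\<in>UNIV. x0 $ j)"
          using sw tpos by (simp add: mult_nonneg_nonpos)
        also have "\<dots> = l1norm x0" using l1S[OF x0S] by simp
        finally have "y = x0" using UM yS unfolding unique_minimizer_def by auto
        then have "t *\<^sub>R w = 0" unfolding y_def by simp
        then show "w \<in> {0}" using tpos by simp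
      qed
    qed
  qed
qed

end
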